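(* Consider the finite-dimensional problem (P) described in the context. (1) If additionally $\mathbf{x}^\downarrow=0$ is imposed, then (P) reduces to a mixed-integer linear program: all its constraints become mixed-integer linear. (2) Problem (P) reduces to a linear program, in which the constraints can be equivalently expressed as linear constraints in continuous variables only, in each of the following cases: $\mathbf{x}^0\le0$ is additionally imposed; or $K=1$; or $\eta^{c}=\eta^{d}=1$.
   Context: Let $K$ be a positive integer, $\Delta t>0$, $T=K\Delta t$, $\mathcal{K}=\{1,\dots,K\}$, $0\le\underline y\le\bar y$, $\underline x\le0\le\bar x$, efficiencies $\eta^{c},\eta^{d}\in(0,1]$, $\Delta\eta=1/\eta^{d}-\eta^{c}$, $y_0\ge0$ and $\gamma\in[0,T]$. Let $c$ and $\phi$ be real-valued cost functions. Problem (P) minimizes $c(\mathbf{x}^0,\mathbf{x}^\uparrow,\mathbf{x}^\downarrow)+\phi(\mathbf{x}^0,\mathbf{x}^\uparrow,\mathbf{x}^\downarrow,y_0)$. Its variables are $\mathbf{x}^0\in\mathbb{R}^K$; $\mathbf{x}^\uparrow,\mathbf{x}^\downarrow\in\mathbb{R}^K_+$; $\boldsymbol\alpha,\boldsymbol\beta\in\mathbb{R}^K$; $\underline{\boldsymbol\lambda},\bar{\boldsymbol\lambda}\in\mathbb{R}^K_+$; $\underline{\boldsymbol\Lambda}_k\in\mathbb{R}^k_+$ and $\bar{\boldsymbol\Lambda}_k\in\mathbb{R}^k$ for $k\in\mathcal{K}$; and $\upsilon_{1k},\upsilon_{2k}\in\{0,1\}$ for $k\le K-1$. Its constraints are: (a)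 $x^0_k+x^\uparrow_k\le\bar x$ and $x^0_k-x^\downarrow_k\ge\underline x$; (b) $y_0-\gamma\underline\lambda_k-\Delta t\sum_{l\le k}(\alpha_l+\underline\Lambda_{kl})\ge\underline y$; (c) $\alpha_k\ge\eta^{c}x^0_k$, $\alpha_k\ge x^0_k/\eta^{d}$, $\beta_k\ge\eta^{c}(x^0_k+x^\uparrow_k)$ and $\beta_k\ge(x^0_k+x^\uparrow_k)/\eta^{d}$; (d) $\underline\Lambda_{kl}+\underline\lambda_k+\alpha_l-\beta_l\ge0$ for $l\le k$; (e) $y_0+\gamma\bar\lambda_k+\Delta t\sum_{l\le k}\bar\Lambda_{kl}\le\bar y$; (f) $\bar\Lambda_{kk}\ge-\eta^{c}x^0_k$, $\bar\Lambda_{kk}\ge\eta^{c}(x^\downarrow_k-x^0_k)-\bar\lambda_k$ and $\bar\Lambda_{kk}\ge0$; (g) for $k\le K-1$: $(1-\upsilon_{1k})\underline x\le x^0_k-x^\downarrow_k\le\upsilon_{1k}\bar x$ and $\upsilon_{2k}\underline x\le x^0_k\le(1-\upsilon_{2k})\bar x$; (h) for $l<k$: - $\bar\Lambda_{kl}\ge\frac{x^\downarrow_l-x^0_l}{\eta^{d}}-\bar\lambda_k+(1-\upsilon_{1l})\Delta\eta\,\underline x$, - $\bar\Lambda_{kl}\ge-\frac{x^0_l}{\eta^{d}}+\upsilon_{2l}\Delta\eta\,\underline x$, - $\bar\Lambda_{kl}\ge\eta^{c}(x^\downarrow_l-x^0_l)-\bar\lambda_k-\upsilon_{1l}\Delta\eta\,\bar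 x$, - $\bar\Lambda_{kl}\ge-\eta^{c}x^0_l-(1-\upsilon_{2l})\Delta\eta\,\bar x$; (i) for $l<k$: the bilinear constraint $\bar\Lambda_{kl}x^\downarrow_l+\bar\lambda_kx^0_l\ge\upsilon_{2l}\frac{\underline x(\bar x-\underline x)}{\eta^{d}}-\upsilon_{1l}\frac{\bar x^2}{4\eta^{d}}$. All unqualified indices range over $\mathcal{K}$. *)

theory Defs
  imports Main "HOL-Library.Extended_Real"
begin

text \<open>Time steps are indexed by 1..K. Vectors are functions nat => real; only the entries
  with index in {1..K} are meaningful. Lower-triangular families Lambda_k (k in 1..K) are
  encoded as functions nat => nat => real, entry (k,l) with 1 <= l <= k.
  Binary variables upsilon are real-valued and constrained to {0,1}.\<close>

definition P_constraints ::
  "nat \<Rightarrow> real \<Rightarrow> real \<Rightarrow> real \<Rightarrow> real \<Rightarrow> real \<Rightarrow> real \<Rightarrow> real \<Rightarrow> real \<Rightarrow> real \<Rightarrow>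
   (nat \<Rightarrow> real) \<Rightarrow> (nat \<Rightarrow> real) \<Rightarrow> (nat \<Rightarrow> real) \<Rightarrow>
   (nat \<Rightarrow> real) \<Rightarrow> (nat \<Rightarrow> real) \<Rightarrow> (nat \<Rightarrow> real) \<Rightarrow> (nat \<Rightarrow> real) \<Rightarrow>
   (nat \<Rightarrow> nat \<Rightarrow> real) \<Rightarrow> (nat \<Rightarrow> nat \<Rightarrow> real) \<Rightarrow> (nat \<Rightarrow> real) \<Rightarrow> (nat \<Rightarrow> real) \<Rightarrow> bool"
where
  "P_constraints K dt ylo yhi xlo xhi ec ed y0 \<gamma> x0 xup xdn \<alpha> \<beta> lamlo lamhi Lamlo Lamhi u1 u2 \<longleftrightarrow>
    (let de = 1 / ed - ec in
     (\<forall>k\<in>{1..K}. xup k \<ge> 0 \<and> xdn k \<ge> 0 \<and> lamlo k \<ge> 0 \<and> lamhi k \<ge> 0) \<and>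
     (\<forall>k\<in>{1..K}. \<forall>l\<in>{1..k}. Lamlo k l \<ge> 0) \<and>
     \<comment> \<open>(a)\<close>
     (\<forall>k\<in>{1..K}. x0 k + xup k \<le> xhi \<and> x0 k - xdn k \<ge> xlo) \<and>
     \<comment> \<open>(b)\<close>
     (\<forall>k\<in>{1..K}. y0 - \<gamma> * lamlo k - dt * (\<Sum>l=1..k. \<alpha> l + Lamlo k l) \<ge> ylo) \<and>
     \<comment> \<open>(c)\<close>
     (\<forall>k\<in>{1..K}. \<alpha> k \<ge> ec * x0 k \<and> \<alpha> k \<ge> x0 k / ed \<and>
        \<beta> k \<ge> ec * (x0 k + xup k) \<and> \<beta> k \<ge> (x0 k + xup k) / ed) \<and>
     \<comment> \<open>(d)\<close>
     (\<forall>k\<in>{1..K}. \<forall>l\<in>{1..k}. Lamlo k l + lamlo k + \<alpha> l - \<beta> l \<ge> 0) \<and>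
     \<comment> \<open>(e)\<close>
     (\<forall>k\<in>{1..K}. y0 + \<gamma> * lamhi k + dt * (\<Sum>l=1..k. Lamhi k l) \<le> yhi) \<and>
     \<comment> \<open>(f)\<close>
     (\<forall>k\<in>{1..K}. Lamhi k k \<ge> - ec * x0 k \<and> Lamhi k k \<ge> ec * (xdn k - x0 k) - lamhi k
        \<and> Lamhi k k \<ge> 0) \<and>
     \<comment> \<open>(g)\<close>
     (\<forall>k\<in>{1..K-1}. u1 k \<in> {0,1} \<and> u2 k \<in> {0,1} \<and>
        (1 - u1 k) * xlo \<le> x0 k - xdn k \<and> x0 k - xdn k \<le> u1 k * xhi \<and>
        u2 k * xlo \<le> x0 k \<and> x0 k \<le> (1 - u2 k) * xhi) \<and>
     \<comment> \<open>(h)\<close>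
     (\<forall>k\<in>{1..K}. \<forall>l\<in>{1..<k}.
        Lamhi k l \<ge> (xdn l - x0 l) / ed - lamhi k + (1 - u1 l) * de * xlo \<and>
        Lamhi k l \<ge> - x0 l / ed + u2 l * de * xlo \<and>
        Lamhi k l \<ge> ec * (xdn l - x0 l) - lamhi k - u1 l * de * xhi \<and>
        Lamhi k l \<ge> - ec * x0 l - (1 - u2 l) * de * xhi) \<and>
     \<comment> \<open>(i)\<close>
     (\<forall>k\<in>{1..K}. \<forall>l\<in>{1..<k}.
        Lamhi k l * xdn l + lamhi k * x0 l \<ge>
          u2 l * (xlo * (xhi - xlo) / ed) - u1 l * (xhi ^ 2 / (4 * ed))))"

text \<open>Projection of the feasible set of (P) onto the variables (x^0, x^up, x^down) on which
  the objective depends; entries outside 1..K are normalised to 0.\<close>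

definition P_feasible_set ::
  "nat \<Rightarrow> real \<Rightarrow> real \<Rightarrow> real \<Rightarrow> real \<Rightarrow> real \<Rightarrow> real \<Rightarrow> real \<Rightarrow> real \<Rightarrow> real \<Rightarrow>
   ((nat \<Rightarrow> real) \<times> (nat \<Rightarrow> real) \<times> (nat \<Rightarrow> real)) set"
where
  "P_feasible_set K dt ylo yhi xlo xhi ec ed y0 \<gamma> =
    {(x0, xup, xdn). (\<forall>j. j \<notin> {1..K} \<longrightarrow> x0 j = 0 \<and> xup j = 0 \<and> xdn j = 0) \<and>
      (\<exists>\<alpha> \<beta> lamlo lamhi Lamlo Lamhi u1 u2.
         P_constraints K dt ylo yhi xlo xhi ec ed y0 \<gamma> x0 xup xdn \<alpha> \<beta> lamlo lamhi Lamlo Lamhi u1 u2)}"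

definition milp_representable ::
  "nat \<Rightarrow> ((nat \<Rightarrow> real) \<times> (nat \<Rightarrow> real) \<times> (nat \<Rightarrow> real)) set \<Rightarrow> bool" where
  "milp_representable K S \<longleftrightarrow>
    (\<exists>(m::nat) (p::nat) (q::nat) (A0::nat\<Rightarrow>nat\<Rightarrow>real) (Au::nat\<Rightarrow>nat\<Rightarrow>real) (Ad::nat\<Rightarrow>nat\<Rightarrow>real)
       (B::nat\<Rightarrow>nat\<Rightarrow>real) (C::nat\<Rightarrow>nat\<Rightarrow>real) (b::nat\<Rightarrow>real).
      S = {(x0, xup, xdn). (\<forall>j. j \<notin> {1..K} \<longrightarrow> x0 j = 0 \<and> xup j = 0 \<and> xdn j = 0) \<and>
        (\<exists>(z::nat\<Rightarrow>real) (w::nat\<Rightarrow>real). (\<forall>j<q. w j \<in> {0,1}) \<and>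
          (\<forall>i<m. (\<Sum>j=1..K. A0 i j * x0 j + Au i j * xup j + Ad i j * xdn j)
                 + (\<Sum>j<p. B i j * z j) + (\<Sum>j<q. C i j * w j) \<le> b i))})"

definition lp_representable ::
  "nat \<Rightarrow> ((nat \<Rightarrow> real) \<times> (nat \<Rightarrow> real) \<times> (nat \<Rightarrow> real)) set \<Rightarrow> bool" where
  "lp_representable K S \<longleftrightarrow>
    (\<exists>(m::nat) (p::nat) (A0::nat\<Rightarrow>nat\<Rightarrow>real) (Au::nat\<Rightarrow>nat\<Rightarrow>real) (Ad::nat\<Rightarrow>nat\<Rightarrow>real)
       (B::nat\<Rightarrow>nat\<Rightarrow>real) (b::nat\<Rightarrow>real).
      S = {(x0, xup, xdn). (\<forall>j. j \<notin> {1..K} \<longrightarrow> x0 j = 0 \<and> xup j = 0 \<and> xdn j = 0) \<and>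
        (\<exists>(z::nat\<Rightarrow>real).
          (\<forall>i<m. (\<Sum>j=1..K. A0 i j * x0 j + Au i j * xup j + Ad i j * xdn j)
                 + (\<Sum>j<p. B i j * z j) \<le> b i))})"

end

theory Submission
  imports Defs "HOL-Library.Nat_Bijection"
begin


definition linf :: "((nat \<Rightarrow> real) \<Rightarrow> real) \<Rightarrow> bool" where
  "linf f \<longleftrightarrow> (\<exists>c a N. \<forall>M\<ge>N. \<forall>v. f v = c + (\<Sum>j<M. a j * v j))"

definition polyh :: "((nat \<Rightarrow> real) \<Rightarrow> bool) \<Rightarrow> bool" where
  "polyh P \<longleftrightarrow> (\<exists>(m::nat) A b (N::nat). \<forall>M\<ge>N. \<forall>v. P v \<longleftrightarrow> (\<forall>i<m. (\<Sum>j<M. A i j * v j) \<le> b i))"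

lemma linf_const: "linf (\<lambda>v. c)"
  unfolding linf_def by (rule exI[of _ c], rule exI[of _ "\<lambda>_. 0"], auto)

lemma linf_var: "linf (\<lambda>v. v j)"
  unfolding linf_def
proof (intro exI allI impI)
  fix M :: nat and v :: "nat \<Rightarrow> real" assume "Suc j \<le> M"
  then show "v j = 0 + (\<Sum>i<M. (if i = j then 1 else 0) * v i)"
  proof -
    have "(\<Sum>i<M. (if i = j then 1 else 0) * v i) = (\<Sum>i<M. if i = j then v i else 0)"
      by (rule sum.cong) auto
    then show ?thesis using \<open>Suc j \<le> M\<close> by simp
  qed
qed

lemma linf_add: assumes "linf f" "linf g" shows "linf (\<lambda>v. f v + g v)"
proof -
  obtain c1 a1 N1 where 1: "\<forall>M\<ge>N1. \<forall>v. f v = c1 + (\<Sum>j<M. a1 j * v j)" using assms(1) linf_def by auto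
  obtain c2 a2 N2 where 2: "\<forall>M\<ge>N2. \<forall>v. g v = c2 + (\<Sum>j<M. a2 j * v j)" using assms(2) linf_def by auto
  show ?thesis unfolding linf_def
  proof (intro exI allI impI)
    fix M :: nat and v :: "nat \<Rightarrow> real" assume "max N1 N2 \<le> M"
    then have "f v = c1 + (\<Sum>j<M. a1 j * v j)" "g v = c2 + (\<Sum>j<M. a2 j * v j)" using 1 2 by auto
    then show "f v + g v = (c1 + c2) + (\<Sum>j<M. (a1 j + a2 j) * v j)"
      by (simp add: sum.distrib distrib_right)
  qed
qed

lemma linf_cmult: assumes "linf f" shows "linf (\<lambda>v. c * f v)"
proof -
  obtain c1 a1 N1 where 1: "\<forall>M\<ge>N1. \<forall>v. f v = c1 + (\<Sum>j<M. a1 j * v j)" using assms(1) linf_def by auto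
  show ?thesis unfolding linf_def
  proof (intro exI allI impI)
    fix M :: nat and v :: "nat \<Rightarrow> real" assume "N1 \<le> M"
    then show "c * f v = c * c1 + (\<Sum>j<M. (c * a1 j) * v j)"
      using 1 by (simp add: sum_distrib_left distrib_left mult.assoc)
  qed
qed

lemma linf_neg: assumes "linf f" shows "linf (\<lambda>v. - f v)"
  using linf_cmult[OF assms, of "-1"] by simp

lemma linf_diff: assumes "linf f" "linf g" shows "linf (\<lambda>v. f v - g v)"
  using linf_add[OF assms(1) linf_neg[OF assms(2)]] by simp

lemma linf_multc: assumes "linf f" shows "linf (\<lambda>v. f v * c)"
  using linf_cmult[OF assms, of c] by (simp add: mult.commute)

lemma linf_divc: assumes "linf f" shows "linf (\<lambda>v. f v / c)"
  using linf_cmult[OF assms, of "1/c"] by simp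

lemma linf_sum_fin: "finite A \<Longrightarrow> (\<forall>l\<in>A. linf (f l)) \<Longrightarrow> linf (\<lambda>v. \<Sum>l\<in>A. f l v)"
proof (induction A rule: finite_induct)
  case empty then show ?case using linf_const[of 0] by simp
next
  case (insert x F)
  then show ?case using linf_add[of "f x" "\<lambda>v. \<Sum>l\<in>F. f l v"] by simp
qed

lemma linf_sum: assumes "\<And>l. l \<in> A \<Longrightarrow> linf (f l)" shows "linf (\<lambda>v. \<Sum>l\<in>A. f l v)"
proof (cases "finite A")
  case True then show ?thesis using linf_sum_fin assms by blast
next
  case False then show ?thesis using linf_const[of 0] by simp
qed

lemma polyh_le: assumes "linf f" "linf g" shows "polyh (\<lambda>v. f v \<le> g v)"
proof -
  obtain c a N where 1: "\<forall>M\<ge>N. \<forall>v. f v - g v = c + (\<Sum>j<M. a j * v j)"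
    using linf_diff[OF assms] linf_def by auto
  show ?thesis unfolding polyh_def
  proof (intro exI allI impI)
    fix M :: nat and v :: "nat \<Rightarrow> real" assume "N \<le> M"
    then have "f v - g v = c + (\<Sum>j<M. a j * v j)" using 1 by auto
    then show "f v \<le> g v \<longleftrightarrow> (\<forall>i<1::nat. (\<Sum>j<M. a j * v j) \<le> - c)" by auto
  qed
qed

lemma polyh_true: "polyh (\<lambda>v. True)"
  unfolding polyh_def by (rule exI[of _ 0]) auto

lemma split_rows: "(\<forall>i<(m1::nat)+(m2::nat). (if i < m1 then X i else Y (i - m1))) \<longleftrightarrow> (\<forall>i<m1. X i) \<and> (\<forall>i<m2. Y i)"
proof safe
  fix i assume "\<forall>i<m1+m2. (if i < m1 then X i else Y (i - m1))" "i < m2"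
  moreover have "m1 + i < m1 + m2" using \<open>i < m2\<close> by simp
  ultimately have "(if m1 + i < m1 then X (m1+i) else Y (m1 + i - m1))" by blast
  then show "Y i" by simp
qed auto

lemma polyh_conj: assumes "polyh P" "polyh Q" shows "polyh (\<lambda>v. P v \<and> Q v)"
proof -
  obtain m1 A1 b1 N1 where 1: "\<forall>M\<ge>(N1::nat). \<forall>v. P v \<longleftrightarrow> (\<forall>i<(m1::nat). (\<Sum>j<M. A1 i j * v j) \<le> b1 i)"
    using assms(1) polyh_def by auto
  obtain m2 A2 b2 N2 where 2: "\<forall>M\<ge>(N2::nat). \<forall>v. Q v \<longleftrightarrow> (\<forall>i<(m2::nat). (\<Sum>j<M. A2 i j * v j) \<le> b2 i)"
    using assms(2) polyh_def by auto
  show ?thesis unfolding polyh_def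
  proof (intro exI allI impI)
    fix M :: nat and v :: "nat \<Rightarrow> real" assume M: "max N1 N2 \<le> M"
    have "(\<forall>i<m1+m2. (\<Sum>j<M. (if i < m1 then A1 i else A2 (i - m1)) j * v j)
            \<le> (if i < m1 then b1 i else b2 (i - m1))) \<longleftrightarrow>
          (\<forall>i<m1+m2. (if i < m1 then (\<Sum>j<M. A1 i j * v j) \<le> b1 i else (\<Sum>j<M. A2 (i-m1) j * v j) \<le> b2 (i - m1)))"
      by (intro all_cong) auto
    also have "\<dots> \<longleftrightarrow> (\<forall>i<m1. (\<Sum>j<M. A1 i j * v j) \<le> b1 i) \<and> (\<forall>i<(m2::nat). (\<Sum>j<M. A2 i j * v j) \<le> b2 i)"
      by (rule split_rows)
    also have "\<dots> \<longleftrightarrow> P v \<and> Q v" using 1 2 M by auto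
    finally show "P v \<and> Q v \<longleftrightarrow> (\<forall>i<m1+m2. (\<Sum>j<M. (if i < m1 then A1 i else A2 (i - m1)) j * v j)
            \<le> (if i < m1 then b1 i else b2 (i - m1)))" by simp
  qed
qed

lemma polyh_ball_fin: "finite A \<Longrightarrow> (\<forall>x\<in>A. polyh (P x)) \<Longrightarrow> polyh (\<lambda>v. \<forall>x\<in>A. P x v)"
proof (induction A rule: finite_induct)
  case empty then show ?case using polyh_true by simp
next
  case (insert x F)
  then show ?case using polyh_conj[of "P x" "\<lambda>v. \<forall>x\<in>F. P x v"] by simp
qed

lemma polyh_ball: "finite A \<Longrightarrow> (\<And>x. x \<in> A \<Longrightarrow> polyh (P x)) \<Longrightarrow> polyh (\<lambda>v. \<forall>x\<in>A. P x v)"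
  using polyh_ball_fin by blast

lemma polyh_eq: assumes "linf f" "linf g" shows "polyh (\<lambda>v. f v = g v)"
proof -
  have "(\<lambda>v. f v = g v) = (\<lambda>v. f v \<le> g v \<and> g v \<le> f v)" by (auto simp: fun_eq_iff)
  then show ?thesis using polyh_conj[OF polyh_le[OF assms] polyh_le[OF assms(2,1)]] by simp
qed

lemmas polyh_intros = polyh_conj polyh_ball polyh_le polyh_eq linf_const linf_var linf_add linf_diff
  linf_neg linf_cmult linf_multc linf_divc linf_sum

definition mrg :: "(nat \<Rightarrow> real) \<Rightarrow> (nat \<Rightarrow> real) \<Rightarrow> (nat \<Rightarrow> real) \<Rightarrow> (nat \<Rightarrow> real) \<Rightarrow> (nat \<Rightarrow> real) \<Rightarrow> nat \<Rightarrow> real" where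
  "mrg x0 xu xd z w n = (if n mod 5 = 0 then x0 (n div 5) else if n mod 5 = 1 then xu (n div 5)
     else if n mod 5 = 2 then xd (n div 5) else if n mod 5 = 3 then z (n div 5) else w (n div 5))"

definition X0 :: "(nat \<Rightarrow> real) \<Rightarrow> nat \<Rightarrow> real" where "X0 v = (\<lambda>j. v (5*j))"
definition XU :: "(nat \<Rightarrow> real) \<Rightarrow> nat \<Rightarrow> real" where "XU v = (\<lambda>j. v (5*j+1))"
definition XD :: "(nat \<Rightarrow> real) \<Rightarrow> nat \<Rightarrow> real" where "XD v = (\<lambda>j. v (5*j+2))"
definition Zp :: "(nat \<Rightarrow> real) \<Rightarrow> nat \<Rightarrow> real" where "Zp v = (\<lambda>j. v (5*j+3))"
definition Wp :: "(nat \<Rightarrow> real) \<Rightarrow> nat \<Rightarrow> real" where "Wp v = (\<lambda>j. v (5*j+4))"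

lemma mrg_simps [simp]:
  "X0 (mrg x0 xu xd z w) = x0" "XU (mrg x0 xu xd z w) = xu" "XD (mrg x0 xu xd z w) = xd"
  "Zp (mrg x0 xu xd z w) = z" "Wp (mrg x0 xu xd z w) = w"
proof -
  have a: "(5*j) mod 5 = 0" "(5*j) div 5 = j" "(5*j+1) mod 5 = 1" "(5*j+1) div 5 = j"
    "(5*j+2) mod 5 = 2" "(5*j+2) div 5 = j" "(5*j+3) mod 5 = 3" "(5*j+3) div 5 = j"
    "(5*j+4) mod 5 = 4" "(5*j+4) div 5 = j" for j :: nat by presburger+
  show "X0 (mrg x0 xu xd z w) = x0" "XU (mrg x0 xu xd z w) = xu" "XD (mrg x0 xu xd z w) = xd"
  "Zp (mrg x0 xu xd z w) = z" "Wp (mrg x0 xu xd z w) = w"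
    unfolding fun_eq_iff X0_def XU_def XD_def Zp_def Wp_def mrg_def by (simp_all only: a) simp_all
qed

lemma mrg_at:
  "mrg x0 xu xd z w (5*j) = x0 j" "mrg x0 xu xd z w (5*j+1) = xu j" "mrg x0 xu xd z w (5*j+2) = xd j"
  "mrg x0 xu xd z w (5*j+3) = z j" "mrg x0 xu xd z w (5*j+4) = w j"
  using mrg_simps[of x0 xu xd z w] unfolding X0_def XU_def XD_def Zp_def Wp_def fun_eq_iff by auto

lemma sum_5: "(\<Sum>j<5*(N::nat). g j) = (\<Sum>t<N. g (5*t) + g (5*t+1) + g (5*t+2) + g (5*t+3) + g (5*t+4))"
proof (induction N)
  case 0 then show ?case by simp
next
  case (Suc N)
  have e: "5 * Suc N = Suc (Suc (Suc (Suc (Suc (5*N)))))" by simp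
  have e2: "Suc (Suc (Suc n)) = 3 + n" "Suc (Suc (Suc (Suc n))) = 4 + n" for n :: nat by simp_all
  show ?case unfolding e sum.lessThan_Suc Suc.IH by (simp add: e2 algebra_simps)
qed

lemma polyh_rep:
  assumes "polyh Q"
  shows "\<exists>(m::nat) (p::nat) A0 Au Ad B C b. \<forall>x0 xu xd z w. (\<forall>j. j \<notin> {1..K} \<longrightarrow> x0 j = 0 \<and> xu j = 0 \<and> xd j = 0) \<longrightarrow>
     (Q (mrg x0 xu xd z w) \<longleftrightarrow> (\<forall>i<m. (\<Sum>j=1..K. A0 i j * x0 j + Au i j * xu j + Ad i j * xd j)
        + (\<Sum>j<p. B i j * z j) + (\<Sum>j<p. C i j * w j) \<le> b i))"
proof -
  obtain m A b N where 1: "\<forall>M\<ge>(N::nat). \<forall>v. Q v \<longleftrightarrow> (\<forall>i<(m::nat). (\<Sum>j<M. A i j * v j) \<le> b i)"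
    using assms polyh_def by auto
  define P where "P = max N (K+1)"
  have key: "Q (mrg x0 xu xd z w) \<longleftrightarrow> (\<forall>i<m. (\<Sum>j=1..K. A i (5*j) * x0 j + A i (5*j+1) * xu j + A i (5*j+2) * xd j)
        + (\<Sum>j<P. A i (5*j+3) * z j) + (\<Sum>j<P. A i (5*j+4) * w j) \<le> b i)"
    if supp: "\<forall>j. j \<notin> {1..K} \<longrightarrow> x0 j = 0 \<and> xu j = 0 \<and> xd j = 0" for x0 xu xd z w :: "nat \<Rightarrow> real"
  proof -
    have Q: "Q (mrg x0 xu xd z w) \<longleftrightarrow> (\<forall>i<m. (\<Sum>j<5*P. A i j * mrg x0 xu xd z w j) \<le> b i)"
    proof -
      have "N \<le> P" by (simp add: P_def)
      then have "N \<le> 5*P" by linarith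
      then show ?thesis using 1 by blast
    qed
    have S: "(\<Sum>j<5*P. A i j * mrg x0 xu xd z w j) =
      (\<Sum>j=1..K. A i (5*j) * x0 j + A i (5*j+1) * xu j + A i (5*j+2) * xd j)
        + (\<Sum>j<P. A i (5*j+3) * z j) + (\<Sum>j<P. A i (5*j+4) * w j)" for i
    proof -
      have "(\<Sum>j<5*P. A i j * mrg x0 xu xd z w j) =
        (\<Sum>j<P. A i (5*j) * x0 j + A i (5*j+1) * xu j + A i (5*j+2) * xd j)
        + (\<Sum>j<P. A i (5*j+3) * z j) + (\<Sum>j<P. A i (5*j+4) * w j)"
        by (simp only: sum_5 mrg_at) (simp add: sum.distrib)
      also have "(\<Sum>j<P. A i (5*j) * x0 j + A i (5*j+1) * xu j + A i (5*j+2) * xd j)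
          = (\<Sum>j=1..K. A i (5*j) * x0 j + A i (5*j+1) * xu j + A i (5*j+2) * xd j)"
        by (rule sum.mono_neutral_right) (use supp in \<open>auto simp: P_def\<close>)
      finally show ?thesis .
    qed
    show ?thesis using Q S by simp
  qed
  show ?thesis
    apply (rule exI[of _ m], rule exI[of _ P], rule exI[of _ "\<lambda>i j. A i (5*j)"], rule exI[of _ "\<lambda>i j. A i (5*j+1)"],
      rule exI[of _ "\<lambda>i j. A i (5*j+2)"], rule exI[of _ "\<lambda>i j. A i (5*j+3)"], rule exI[of _ "\<lambda>i j. A i (5*j+4)"],
      rule exI[of _ b])
    using key by blast
qed



lemma milp_intro:
  assumes "polyh (\<lambda>v. S (X0 v) (XU v) (XD v) (Zp v) (Wp v))"
  shows "milp_representable K {(x0, xup, xdn). (\<forall>j. j \<notin> {1..K} \<longrightarrow> x0 j = 0 \<and> xup j = 0 \<and> xdn j = 0) \<and>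
     (\<exists>z w. (\<forall>j. w j \<in> {0,1}) \<and> S x0 xup xdn z w)}"
proof -
  obtain m p A0 Au Ad B C b where R0: "\<forall>x0 xu xd z w. (\<forall>j. j \<notin> {1..K} \<longrightarrow> x0 j = 0 \<and> xu j = 0 \<and> xd j = 0) \<longrightarrow>
     (S (X0 (mrg x0 xu xd z w)) (XU (mrg x0 xu xd z w)) (XD (mrg x0 xu xd z w)) (Zp (mrg x0 xu xd z w)) (Wp (mrg x0 xu xd z w))
        \<longleftrightarrow> (\<forall>i<(m::nat). (\<Sum>j=1..K. A0 i j * x0 j + Au i j * xu j + Ad i j * xd j)
        + (\<Sum>j<(p::nat). B i j * z j) + (\<Sum>j<p. C i j * w j) \<le> b i))"
    using polyh_rep[OF assms, of K] by blast
  have R: "\<forall>x0 xu xd z w. (\<forall>j. j \<notin> {1..K} \<longrightarrow> x0 j = 0 \<and> xu j = 0 \<and> xd j = 0) \<longrightarrow>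
     (S x0 xu xd z w \<longleftrightarrow> (\<forall>i<(m::nat). (\<Sum>j=1..K. A0 i j * x0 j + Au i j * xu j + Ad i j * xd j)
        + (\<Sum>j<(p::nat). B i j * z j) + (\<Sum>j<p. C i j * w j) \<le> b i))"
    using R0 by (simp only: mrg_simps)
  show ?thesis unfolding milp_representable_def
  proof (rule exI[of _ m], rule exI[of _ p], rule exI[of _ p], intro exI, rule set_eqI)
    fix t :: "(nat \<Rightarrow> real) \<times> (nat \<Rightarrow> real) \<times> (nat \<Rightarrow> real)"
    obtain x0 xu xd where t: "t = (x0, xu, xd)" by (cases t) auto
    have "(\<exists>z w. (\<forall>j. w j \<in> {0,1}) \<and> S x0 xu xd z w) \<longleftrightarrow>
      (\<exists>z w. (\<forall>j<p. w j \<in> {0,1}) \<and> (\<forall>i<m. (\<Sum>j=1..K. A0 i j * x0 j + Au i j * xu j + Ad i j * xd j)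
        + (\<Sum>j<p. B i j * z j) + (\<Sum>j<p. C i j * w j) \<le> b i))"
      if supp: "\<forall>j. j \<notin> {1..K} \<longrightarrow> x0 j = 0 \<and> xu j = 0 \<and> xd j = 0"
    proof
      assume "\<exists>z w. (\<forall>j. w j \<in> {0,1}) \<and> S x0 xu xd z w"
      then show "\<exists>z w. (\<forall>j<p. w j \<in> {0,1}) \<and> (\<forall>i<m. (\<Sum>j=1..K. A0 i j * x0 j + Au i j * xu j + Ad i j * xd j)
        + (\<Sum>j<p. B i j * z j) + (\<Sum>j<p. C i j * w j) \<le> b i)" using R supp by blast
    next
      assume "\<exists>z w. (\<forall>j<p. w j \<in> {0,1}) \<and> (\<forall>i<m. (\<Sum>j=1..K. A0 i j * x0 j + Au i j * xu j + Ad i j * xd j)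
        + (\<Sum>j<p. B i j * z j) + (\<Sum>j<p. C i j * w j) \<le> b i)"
      then obtain z w where w: "\<forall>j<p. w j \<in> {0,1}" and I: "\<forall>i<m. (\<Sum>j=1..K. A0 i j * x0 j + Au i j * xu j + Ad i j * xd j)
        + (\<Sum>j<p. B i j * z j) + (\<Sum>j<p. C i j * w j) \<le> b i" by blast
      define w' where "w' = (\<lambda>j. if j < p then w j else 0)"
      have "(\<Sum>j<p. C i j * w' j) = (\<Sum>j<p. C i j * w j)" for i
        by (rule sum.cong) (auto simp: w'_def)
      then have "\<forall>i<m. (\<Sum>j=1..K. A0 i j * x0 j + Au i j * xu j + Ad i j * xd j)
        + (\<Sum>j<p. B i j * z j) + (\<Sum>j<p. C i j * w' j) \<le> b i" using I by simp
      then have "S x0 xu xd z w'" using R supp by blast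
      moreover have "\<forall>j. w' j \<in> {0,1}" using w by (auto simp: w'_def)
      ultimately show "\<exists>z w. (\<forall>j. w j \<in> {0,1}) \<and> S x0 xu xd z w" by blast
    qed
    then show "t \<in> {(x0, xup, xdn). (\<forall>j. j \<notin> {1..K} \<longrightarrow> x0 j = 0 \<and> xup j = 0 \<and> xdn j = 0) \<and>
     (\<exists>z w. (\<forall>j. w j \<in> {0,1}) \<and> S x0 xup xdn z w)} \<longleftrightarrow>
      t \<in> {(x0, xup, xdn). (\<forall>j. j \<notin> {1..K} \<longrightarrow> x0 j = 0 \<and> xup j = 0 \<and> xdn j = 0) \<and>
        (\<exists>z w. (\<forall>j<p. w j \<in> {0,1}) \<and> (\<forall>i<m. (\<Sum>j=1..K. A0 i j * x0 j + Au i j * xup j + Ad i j * xdn j)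
        + (\<Sum>j<p. B i j * z j) + (\<Sum>j<p. C i j * w j) \<le> b i))}"
      unfolding t by auto
  qed
qed

lemma lp_intro:
  assumes "polyh (\<lambda>v. S (X0 v) (XU v) (XD v) (Zp v) (Wp v))"
  shows "lp_representable K {(x0, xup, xdn). (\<forall>j. j \<notin> {1..K} \<longrightarrow> x0 j = 0 \<and> xup j = 0 \<and> xdn j = 0) \<and>
     (\<exists>z. S x0 xup xdn z (\<lambda>_. 0))}"
proof -
  obtain m p A0 Au Ad B C b where R0: "\<forall>x0 xu xd z w. (\<forall>j. j \<notin> {1..K} \<longrightarrow> x0 j = 0 \<and> xu j = 0 \<and> xd j = 0) \<longrightarrow>
     (S (X0 (mrg x0 xu xd z w)) (XU (mrg x0 xu xd z w)) (XD (mrg x0 xu xd z w)) (Zp (mrg x0 xu xd z w)) (Wp (mrg x0 xu xd z w))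
        \<longleftrightarrow> (\<forall>i<(m::nat). (\<Sum>j=1..K. A0 i j * x0 j + Au i j * xu j + Ad i j * xd j)
        + (\<Sum>j<(p::nat). B i j * z j) + (\<Sum>j<p. C i j * w j) \<le> b i))"
    using polyh_rep[OF assms, of K] by blast
  have R: "\<forall>x0 xu xd z w. (\<forall>j. j \<notin> {1..K} \<longrightarrow> x0 j = 0 \<and> xu j = 0 \<and> xd j = 0) \<longrightarrow>
     (S x0 xu xd z w \<longleftrightarrow> (\<forall>i<(m::nat). (\<Sum>j=1..K. A0 i j * x0 j + Au i j * xu j + Ad i j * xd j)
        + (\<Sum>j<(p::nat). B i j * z j) + (\<Sum>j<p. C i j * w j) \<le> b i))"
    using R0 by (simp only: mrg_simps)
  show ?thesis unfolding lp_representable_def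
  proof (rule exI[of _ m], rule exI[of _ p], intro exI, rule set_eqI)
    fix t :: "(nat \<Rightarrow> real) \<times> (nat \<Rightarrow> real) \<times> (nat \<Rightarrow> real)"
    obtain x0 xu xd where t: "t = (x0, xu, xd)" by (cases t) auto
    have "(\<exists>z. S x0 xu xd z (\<lambda>_. 0)) \<longleftrightarrow>
      (\<exists>z. (\<forall>i<m. (\<Sum>j=1..K. A0 i j * x0 j + Au i j * xu j + Ad i j * xd j)
        + (\<Sum>j<p. B i j * z j) \<le> b i))"
      if supp: "\<forall>j. j \<notin> {1..K} \<longrightarrow> x0 j = 0 \<and> xu j = 0 \<and> xd j = 0"
      using R supp by simp
    then show "t \<in> {(x0, xup, xdn). (\<forall>j. j \<notin> {1..K} \<longrightarrow> x0 j = 0 \<and> xup j = 0 \<and> xdn j = 0) \<and>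
     (\<exists>z. S x0 xup xdn z (\<lambda>_. 0))} \<longleftrightarrow>
      t \<in> {(x0, xup, xdn). (\<forall>j. j \<notin> {1..K} \<longrightarrow> x0 j = 0 \<and> xup j = 0 \<and> xdn j = 0) \<and>
        (\<exists>z. (\<forall>i<m. (\<Sum>j=1..K. A0 i j * x0 j + Au i j * xup j + Ad i j * xdn j)
        + (\<Sum>j<p. B i j * z j) \<le> b i))}"
      unfolding t by auto
  qed
qed



definition Core ::
  "nat \<Rightarrow> real \<Rightarrow> real \<Rightarrow> real \<Rightarrow> real \<Rightarrow> real \<Rightarrow> real \<Rightarrow> real \<Rightarrow> real \<Rightarrow> real \<Rightarrow>
   (nat \<Rightarrow> real) \<Rightarrow> (nat \<Rightarrow> real) \<Rightarrow> (nat \<Rightarrow> real) \<Rightarrow>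
   (nat \<Rightarrow> real) \<Rightarrow> (nat \<Rightarrow> real) \<Rightarrow> (nat \<Rightarrow> real) \<Rightarrow> (nat \<Rightarrow> real) \<Rightarrow>
   (nat \<Rightarrow> nat \<Rightarrow> real) \<Rightarrow> (nat \<Rightarrow> nat \<Rightarrow> real) \<Rightarrow> bool" where
"Core K dt ylo yhi xlo xhi ec ed y0 \<gamma> x0 xup xdn \<alpha> \<beta> lamlo lamhi Lamlo Lamhi \<longleftrightarrow>
  (\<forall>k\<in>{1..K}. xup k \<ge> 0 \<and> xdn k \<ge> 0 \<and> lamlo k \<ge> 0 \<and> lamhi k \<ge> 0) \<and>
  (\<forall>k\<in>{1..K}. \<forall>l\<in>{1..k}. Lamlo k l \<ge> 0) \<and>
  (\<forall>k\<in>{1..K}. x0 k + xup k \<le> xhi \<and> x0 k - xdn k \<ge> xlo) \<and>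
  (\<forall>k\<in>{1..K}. y0 - \<gamma> * lamlo k - dt * (\<Sum>l=1..k. \<alpha> l + Lamlo k l) \<ge> ylo) \<and>
  (\<forall>k\<in>{1..K}. \<alpha> k \<ge> ec * x0 k \<and> \<alpha> k \<ge> x0 k / ed \<and>
     \<beta> k \<ge> ec * (x0 k + xup k) \<and> \<beta> k \<ge> (x0 k + xup k) / ed) \<and>
  (\<forall>k\<in>{1..K}. \<forall>l\<in>{1..k}. Lamlo k l + lamlo k + \<alpha> l - \<beta> l \<ge> 0) \<and>
  (\<forall>k\<in>{1..K}. y0 + \<gamma> * lamhi k + dt * (\<Sum>l=1..k. Lamhi k l) \<le> yhi) \<and>
  (\<forall>k\<in>{1..K}. Lamhi k k \<ge> - ec * x0 k \<and> Lamhi k k \<ge> ec * (xdn k - x0 k) - lamhi k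
     \<and> Lamhi k k \<ge> 0)"

definition Hc ::
  "nat \<Rightarrow> real \<Rightarrow> real \<Rightarrow> real \<Rightarrow> real \<Rightarrow> (nat \<Rightarrow> real) \<Rightarrow> (nat \<Rightarrow> real) \<Rightarrow> (nat \<Rightarrow> real) \<Rightarrow>
   (nat \<Rightarrow> nat \<Rightarrow> real) \<Rightarrow> (nat \<Rightarrow> real) \<Rightarrow> (nat \<Rightarrow> real) \<Rightarrow> bool" where
"Hc K xlo xhi ec ed x0 xdn lamhi Lamhi u1 u2 \<longleftrightarrow>
  (\<forall>k\<in>{1..K}. \<forall>l\<in>{1..<k}.
     Lamhi k l \<ge> (xdn l - x0 l) / ed - lamhi k + (1 - u1 l) * (1 / ed - ec) * xlo \<and>
     Lamhi k l \<ge> - x0 l / ed + u2 l * (1 / ed - ec) * xlo \<and>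
     Lamhi k l \<ge> ec * (xdn l - x0 l) - lamhi k - u1 l * (1 / ed - ec) * xhi \<and>
     Lamhi k l \<ge> - ec * x0 l - (1 - u2 l) * (1 / ed - ec) * xhi)"

definition Gc :: "nat \<Rightarrow> real \<Rightarrow> real \<Rightarrow> (nat \<Rightarrow> real) \<Rightarrow> (nat \<Rightarrow> real) \<Rightarrow> (nat \<Rightarrow> real) \<Rightarrow> (nat \<Rightarrow> real) \<Rightarrow> bool" where
"Gc K xlo xhi x0 xdn u1 u2 \<longleftrightarrow> (\<forall>k\<in>{1..K-1}.
   (1 - u1 k) * xlo \<le> x0 k - xdn k \<and> x0 k - xdn k \<le> u1 k * xhi \<and>
   u2 k * xlo \<le> x0 k \<and> x0 k \<le> (1 - u2 k) * xhi)"

definition Bc :: "nat \<Rightarrow> (nat \<Rightarrow> real) \<Rightarrow> (nat \<Rightarrow> real) \<Rightarrow> bool" where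
"Bc K u1 u2 \<longleftrightarrow> (\<forall>k\<in>{1..K-1}. u1 k \<in> {0,1} \<and> u2 k \<in> {0,1})"

definition Ic :: "nat \<Rightarrow> real \<Rightarrow> real \<Rightarrow> real \<Rightarrow> (nat \<Rightarrow> real) \<Rightarrow> (nat \<Rightarrow> real) \<Rightarrow> (nat \<Rightarrow> real) \<Rightarrow>
   (nat \<Rightarrow> nat \<Rightarrow> real) \<Rightarrow> (nat \<Rightarrow> real) \<Rightarrow> (nat \<Rightarrow> real) \<Rightarrow> bool" where
"Ic K xlo xhi ed x0 xdn lamhi Lamhi u1 u2 \<longleftrightarrow> (\<forall>k\<in>{1..K}. \<forall>l\<in>{1..<k}.
   Lamhi k l * xdn l + lamhi k * x0 l \<ge> u2 l * (xlo * (xhi - xlo) / ed) - u1 l * (xhi ^ 2 / (4 * ed)))"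

lemma P_split:
  "P_constraints K dt ylo yhi xlo xhi ec ed y0 \<gamma> x0 xup xdn \<alpha> \<beta> lamlo lamhi Lamlo Lamhi u1 u2 \<longleftrightarrow>
   Core K dt ylo yhi xlo xhi ec ed y0 \<gamma> x0 xup xdn \<alpha> \<beta> lamlo lamhi Lamlo Lamhi \<and>
   Hc K xlo xhi ec ed x0 xdn lamhi Lamhi u1 u2 \<and> Bc K u1 u2 \<and> Gc K xlo xhi x0 xdn u1 u2 \<and>
   Ic K xlo xhi ed x0 xdn lamhi Lamhi u1 u2"
  unfolding P_constraints_def Core_def Hc_def Bc_def Gc_def Ic_def Let_def by blast

lemma P_feas_iff:
  "(x0, xup, xdn) \<in> P_feasible_set K dt ylo yhi xlo xhi ec ed y0 \<gamma> \<longleftrightarrow>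
   (\<forall>j. j \<notin> {1..K} \<longrightarrow> x0 j = 0 \<and> xup j = 0 \<and> xdn j = 0) \<and>
   (\<exists>\<alpha> \<beta> lamlo lamhi Lamlo Lamhi u1 u2.
     Core K dt ylo yhi xlo xhi ec ed y0 \<gamma> x0 xup xdn \<alpha> \<beta> lamlo lamhi Lamlo Lamhi \<and>
     Hc K xlo xhi ec ed x0 xdn lamhi Lamhi u1 u2 \<and> Bc K u1 u2 \<and> Gc K xlo xhi x0 xdn u1 u2 \<and>
     Ic K xlo xhi ed x0 xdn lamhi Lamhi u1 u2)"
  unfolding P_feasible_set_def P_split by simp

definition encZ :: "(nat \<Rightarrow> real) \<Rightarrow> (nat \<Rightarrow> real) \<Rightarrow> (nat \<Rightarrow> real) \<Rightarrow> (nat \<Rightarrow> real) \<Rightarrow>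
   (nat \<Rightarrow> nat \<Rightarrow> real) \<Rightarrow> (nat \<Rightarrow> nat \<Rightarrow> real) \<Rightarrow> nat \<Rightarrow> real" where
"encZ a b c d M1 M2 n = (case prod_decode n of (t, r) \<Rightarrow>
   if t = 0 then a r else if t = 1 then b r else if t = 2 then c r else if t = 3 then d r
   else if t = 4 then (case prod_decode r of (k, l) \<Rightarrow> M1 k l) else (case prod_decode r of (k, l) \<Rightarrow> M2 k l))"

definition dA :: "(nat \<Rightarrow> real) \<Rightarrow> nat \<Rightarrow> real" where "dA z = (\<lambda>r. z (prod_encode (0, r)))"
definition dB :: "(nat \<Rightarrow> real) \<Rightarrow> nat \<Rightarrow> real" where "dB z = (\<lambda>r. z (prod_encode (1, r)))"
definition dC :: "(nat \<Rightarrow> real) \<Rightarrow> nat \<Rightarrow> real" where "dC z = (\<lambda>r. z (prod_encode (2, r)))"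
definition dD :: "(nat \<Rightarrow> real) \<Rightarrow> nat \<Rightarrow> real" where "dD z = (\<lambda>r. z (prod_encode (3, r)))"
definition dM1 :: "(nat \<Rightarrow> real) \<Rightarrow> nat \<Rightarrow> nat \<Rightarrow> real" where "dM1 z = (\<lambda>k l. z (prod_encode (4, prod_encode (k, l))))"
definition dM2 :: "(nat \<Rightarrow> real) \<Rightarrow> nat \<Rightarrow> nat \<Rightarrow> real" where "dM2 z = (\<lambda>k l. z (prod_encode (5, prod_encode (k, l))))"

lemma enc_simps [simp]:
  "dA (encZ a b c d M1 M2) = a" "dB (encZ a b c d M1 M2) = b" "dC (encZ a b c d M1 M2) = c"
  "dD (encZ a b c d M1 M2) = d" "dM1 (encZ a b c d M1 M2) = M1" "dM2 (encZ a b c d M1 M2) = M2"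
  by (auto simp: fun_eq_iff encZ_def dA_def dB_def dC_def dD_def dM1_def dM2_def)

definition Sys1 where
"Sys1 K dt ylo yhi xlo xhi ec ed y0 \<gamma> x0 xup xdn z w \<longleftrightarrow>
   Core K dt ylo yhi xlo xhi ec ed y0 \<gamma> x0 xup xdn (dA z) (dB z) (dC z) (\<lambda>_. 0) (dM1 z) (dM2 z) \<and>
   Hc K xlo xhi ec ed x0 xdn (\<lambda>_. 0) (dM2 z) (\<lambda>l. 1 - w l) w \<and>
   Gc K xlo xhi x0 xdn (\<lambda>l. 1 - w l) w \<and> (\<forall>k\<in>{1..K}. xdn k = 0)"

definition SysL where
"SysL K dt ylo yhi xlo xhi ec ed y0 \<gamma> U1 U2 x0 xup xdn z (w :: nat \<Rightarrow> real) \<longleftrightarrow>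
   Core K dt ylo yhi xlo xhi ec ed y0 \<gamma> x0 xup xdn (dA z) (dB z) (dC z) (dD z) (dM1 z) (dM2 z) \<and>
   Hc K xlo xhi ec ed x0 xdn (dD z) (dM2 z) (\<lambda>_. U1) (\<lambda>_. U2)"

definition Sys2a where
"Sys2a K dt ylo yhi xlo xhi ec ed y0 \<gamma> x0 xup xdn z w \<longleftrightarrow>
   SysL K dt ylo yhi xlo xhi ec ed y0 \<gamma> 0 1 x0 xup xdn z w \<and> (\<forall>k\<in>{1..K}. x0 k \<le> 0)"

lemma polyh_Sys1: "polyh (\<lambda>v. Sys1 K dt ylo yhi xlo xhi ec ed y0 \<gamma> (X0 v) (XU v) (XD v) (Zp v) (Wp v))"
  unfolding Sys1_def Core_def Hc_def Gc_def X0_def XU_def XD_def Zp_def Wp_def dA_def dB_def dC_def dD_def dM1_def dM2_def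
  by (intro polyh_intros) auto

lemma polyh_SysL: "polyh (\<lambda>v. SysL K dt ylo yhi xlo xhi ec ed y0 \<gamma> U1 U2 (X0 v) (XU v) (XD v) (Zp v) (Wp v))"
  unfolding SysL_def Core_def Hc_def Gc_def X0_def XU_def XD_def Zp_def Wp_def dA_def dB_def dC_def dD_def dM1_def dM2_def
  by (intro polyh_intros) auto

lemma polyh_Sys2a: "polyh (\<lambda>v. Sys2a K dt ylo yhi xlo xhi ec ed y0 \<gamma> (X0 v) (XU v) (XD v) (Zp v) (Wp v))"
  unfolding Sys2a_def
  by (intro polyh_intros polyh_SysL) (auto simp: X0_def intro: linf_var)



lemma Core_lamhi:
  assumes C: "Core K dt ylo yhi xlo xhi ec ed y0 \<gamma> x0 xup xdn \<alpha> \<beta> lamlo lamhi Lamlo Lamhi" and g: "0 \<le> \<gamma>"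
    and L: "\<And>k. k \<in> {1..K} \<Longrightarrow> 0 \<le> lamhi' k \<and> lamhi' k \<le> lamhi k \<and> ec * (xdn k - x0 k) - lamhi' k \<le> Lamhi k k"
  shows "Core K dt ylo yhi xlo xhi ec ed y0 \<gamma> x0 xup xdn \<alpha> \<beta> lamlo lamhi' Lamlo Lamhi"
proof -
  have m: "\<gamma> * lamhi' k \<le> \<gamma> * lamhi k" if "k \<in> {1..K}" for k
    using L[OF that] g by (simp add: mult_left_mono)
  have e: "y0 + \<gamma> * lamhi' k + dt * (\<Sum>l=1..k. Lamhi k l) \<le> yhi" if "k \<in> {1..K}" for k
    using m[OF that] C that unfolding Core_def by fastforce
  show ?thesis using C L e unfolding Core_def by auto
qed

lemma h2a_fwd:
  fixes a d lam L u1 u2 xlo xhi ec ed :: real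
  assumes u: "u1 \<in> {0,1}" "u2 \<in> {0,1}"
    and g: "(1 - u1) * xlo \<le> a - d" "a - d \<le> u1 * xhi" "u2 * xlo \<le> a" "a \<le> (1 - u2) * xhi"
    and p: "0 \<le> d" "0 \<le> lam" "a \<le> 0" "0 \<le> de" "xlo \<le> 0" "0 \<le> xhi"
    and h: "L \<ge> (d - a) / ed - lam + (1 - u1) * de * xlo"
      "L \<ge> - a / ed + u2 * de * xlo"
      "L \<ge> ec * (d - a) - lam - u1 * de * xhi"
      "L \<ge> - ec * a - (1 - u2) * de * xhi"
  shows "L \<ge> (d - a) / ed - lam + (1 - 0) * de * xlo \<and>
      L \<ge> - a / ed + 1 * de * xlo \<and>
      L \<ge> ec * (d - a) - lam - 0 * de * xhi \<and>
      L \<ge> - ec * a - (1 - 1) * de * xhi"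
proof -
  have dx: "de * xlo \<le> 0" using p by (simp add: mult_nonneg_nonpos)
  have H4: "L \<ge> - ec * a"
  proof (cases "u2 = 1")
    case True then show ?thesis using h(4) by simp
  next
    case False then have "u2 = 0" using u by auto
    then have "a = 0" using g p by auto
    then show ?thesis using h(2) \<open>u2 = 0\<close> by simp
  qed
  have H3: "L \<ge> ec * (d - a) - lam"
  proof (cases "u1 = 0")
    case True then show ?thesis using h(3) by simp
  next
    case False then have "u1 = 1" using u by auto
    then have "a = 0" "d = 0" using g p by auto
    then show ?thesis using H4 p by simp
  qed
  have H1: "L \<ge> (d - a) / ed - lam + de * xlo"
    using h(1) u dx by auto
  have H2: "L \<ge> - a / ed + de * xlo"
    using h(2) u dx by auto
  show ?thesis using H1 H2 H3 H4 by simp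
qed

lemma h2a_bwd:
  fixes a d lam L M xlo xhi ec ed :: real
  assumes p: "0 \<le> d" "0 \<le> lam" "a \<le> 0" "xlo \<le> a - d" "xlo \<le> 0" "0 \<le> xhi"
      "0 < ec" "ec \<le> 1" "0 < ed" "ed \<le> 1"
    and h: "L \<ge> (d - a) / ed - lam + (1 - 0) * (1/ed - ec) * xlo"
      "L \<ge> - a / ed + 1 * (1/ed - ec) * xlo"
      "L \<ge> ec * (d - a) - lam - 0 * (1/ed - ec) * xhi"
      "L \<ge> - ec * a - (1 - 1) * (1/ed - ec) * xhi"
  shows "L \<ge> (d - a) / ed - min lam (-xlo/ed) + (1 - 0) * (1/ed - ec) * xlo \<and>
      L \<ge> - a / ed + 1 * (1/ed - ec) * xlo \<and>
      L \<ge> ec * (d - a) - min lam (-xlo/ed) - 0 * (1/ed - ec) * xhi \<and>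
      L \<ge> - ec * a - (1 - 1) * (1/ed - ec) * xhi \<and>
      L * d + min lam (-xlo/ed) * a \<ge> 1 * (xlo * (xhi - xlo) / ed) - 0 * (xhi ^ 2 / (4 * ed))"
proof -
  have "ec * ed \<le> 1" using p by (simp add: mult_le_one)
  then have de: "0 \<le> 1/ed - ec" using p by (simp add: field_simps)
  have dx: "(1/ed - ec) * xlo \<le> 0" using de p by (simp add: mult_nonneg_nonpos)
  have "ec * a \<le> 0" using mult_nonneg_nonpos[of ec a] p by simp
  then have "0 \<le> ec * (-a)" by simp
  then have L0: "0 \<le> L" using h(4) by simp
  have c1: "ec * (d - a) + xlo / ed \<le> 0"
  proof -
    have "ec * (d - a) \<le> ec * (-xlo)" using p by (intro mult_left_mono) auto
    also have "\<dots> \<le> -xlo" using p by (simp add: mult_le_cancel_right1 mult_nonneg_nonpos)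
    also have "\<dots> \<le> -xlo / ed" using p by (simp add: field_simps mult_le_cancel_right1 mult_nonpos_nonneg)
    finally show ?thesis by simp
  qed
  have c2: "(d - a) / ed + xlo / ed \<le> 0"
  proof -
    have "(d - a) / ed + xlo / ed = (d - a + xlo) / ed" by (simp add: add_divide_distrib)
    also have "\<dots> \<le> 0" using p by (simp add: divide_nonpos_pos)
    finally show ?thesis .
  qed
  have m1: "L \<ge> (d - a) / ed - min lam (-xlo/ed) + (1/ed - ec) * xlo"
    using h(1) c2 dx L0 by (cases "lam \<le> -xlo/ed") (auto simp: min_def)
  have m3: "L \<ge> ec * (d - a) - min lam (-xlo/ed)"
    using h(3) c1 L0 by (cases "lam \<le> -xlo/ed") (auto simp: min_def)
  have i: "L * d + min lam (-xlo/ed) * a \<ge> xlo * (xhi - xlo) / ed"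
  proof -
    define l' where "l' = min lam (-xlo/ed)"
    have l'0: "0 \<le> l'" using p by (simp add: l'_def divide_nonpos_pos)
    have l'b: "l' \<le> -xlo/ed" by (simp add: l'_def)
    have "0 \<le> L * d" using L0 p by simp
    moreover have "l' * xlo \<le> l' * a" using l'0 p by (intro mult_left_mono) auto
    moreover have "(-xlo/ed) * xlo \<le> l' * xlo" using l'b p by (intro mult_right_mono_neg) auto
    moreover have "xlo * (xhi - xlo) / ed \<le> (-xlo/ed) * xlo"
    proof -
      have "xlo * xhi \<le> 0" using p by (simp add: mult_nonpos_nonneg)
      then have "xlo * (xhi - xlo) \<le> - xlo * xlo" by (simp add: algebra_simps)
      then have "xlo * (xhi - xlo) / ed \<le> (- xlo * xlo) / ed" using p divide_right_mono[of "xlo * (xhi - xlo)" "- xlo * xlo" ed] by simp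
      then show ?thesis by simp
    qed
    ultimately show ?thesis unfolding l'_def[symmetric] by linarith
  qed
  show ?thesis using m1 h(2) m3 h(4) i by simp
qed

lemma h2c_bwd:
  fixes a d lam L xlo xhi :: real
  assumes p: "0 \<le> d" "0 \<le> lam" "xlo \<le> a - d" "a \<le> xhi" "xlo \<le> 0" "0 \<le> xhi"
    and h: "L \<ge> d - a - lam" "L \<ge> - a"
  defines "l' \<equiv> min lam (xhi - xlo)"
    and "u1 \<equiv> (if 0 \<le> a - d then 1 else 0 :: real)" and "u2 \<equiv> (if a \<le> 0 then 1 else 0 :: real)"
  shows "L \<ge> d - a - l'" "u1 \<in> {0,1}" "u2 \<in> {0,1}"
    "(1 - u1) * xlo \<le> a - d" "a - d \<le> u1 * xhi" "u2 * xlo \<le> a" "a \<le> (1 - u2) * xhi"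
    "L * d + l' * a \<ge> u2 * (xlo * (xhi - xlo)) - u1 * (xhi ^ 2 / 4)"
proof -
  have l0: "0 \<le> l'" "l' \<le> xhi - xlo" "l' \<le> lam" using p by (auto simp: l'_def)
  show L1: "L \<ge> d - a - l'"
    using h p by (cases "lam \<le> xhi - xlo") (auto simp: l'_def min_def)
  show "u1 \<in> {0,1}" "u2 \<in> {0,1}" by (auto simp: u1_def u2_def)
  show "(1 - u1) * xlo \<le> a - d" "a - d \<le> u1 * xhi" "u2 * xlo \<le> a" "a \<le> (1 - u2) * xhi"
    using p by (auto simp: u1_def u2_def)
  have P1: "L * d \<ge> (d - a - l') * d" using L1 p by (intro mult_right_mono) auto
  have P2: "L * d \<ge> (- a) * d" using h p by (intro mult_right_mono) auto
  have xx: "xlo * (xhi - xlo) \<le> 0" using p by (simp add: mult_nonpos_nonneg)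
  show "L * d + l' * a \<ge> u2 * (xlo * (xhi - xlo)) - u1 * (xhi ^ 2 / 4)"
  proof (cases "0 \<le> a - d")
    case True
    note T = True
    show ?thesis
    proof (cases "a \<le> 0")
      case True
      then have "a = 0" "d = 0" using T p by auto
      then show ?thesis
        apply (simp add: u1_def u2_def)
        apply (rule order_trans[of _ 0])
        using xx by auto
    next
      case False
      have "l' * (a - d) \<ge> 0" using l0 T by simp
      moreover have "(a - 2*d)^2 \<ge> 0" by simp
      moreover have "a * a \<le> xhi * xhi" using False p by (intro mult_mono) auto
      ultimately have "L * d + l' * a \<ge> - (xhi ^ 2 / 4)"
        using P1 by (simp add: power2_eq_square algebra_simps)
      then show ?thesis using T False by (simp add: u1_def u2_def)
    qed
  next
    case False
    note F = False
    have Q: "L * d + l' * a \<ge> min 0 (a * (l' - d))"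
    proof (cases "l' \<le> d")
      case True
      have "(d - a) * (d - l') \<ge> 0" using True F by simp
      then show ?thesis using P1 by (simp add: algebra_simps)
    next
      case False
      then show ?thesis using P2 by (simp add: algebra_simps)
    qed
    show ?thesis
    proof (cases "a \<le> 0")
      case True
      have "a * (l' - d) \<ge> xlo * (l' - d) \<or> l' - d \<le> 0"
        using p by (auto intro: mult_right_mono)
      moreover have "xlo * (l' - d) \<ge> xlo * (xhi - xlo) \<or> l' - d \<le> 0"
        using p l0 by (auto intro: mult_left_mono_neg)
      moreover have "l' - d \<le> 0 \<Longrightarrow> a * (l' - d) \<ge> 0" using True by (simp add: mult_nonpos_nonpos)
      ultimately have "min 0 (a * (l' - d)) \<ge> xlo * (xhi - xlo)" using xx by auto
      then have "xlo * (xhi - xlo) \<le> L * d + l' * a" using Q by (auto simp: min_def split: if_splits)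
      then show ?thesis using True F by (simp add: u1_def u2_def)
    next
      case False
      have "l' - d \<le> 0 \<or> a * (l' - d) \<ge> 0" using False by (cases "l' - d \<le> 0") auto
      moreover have "l' - d \<le> 0 \<Longrightarrow> L * d + l' * a \<ge> 0"
      proof -
        assume "l' - d \<le> 0"
        then have "(d - a) * (d - l') \<ge> 0" using F by simp
        then show ?thesis using P1 by (simp add: algebra_simps)
      qed
      ultimately have "L * d + l' * a \<ge> 0" using Q by auto
      then show ?thesis using F False by (simp add: u1_def u2_def)
    qed
  qed
qed



lemma p1_fwd:
  assumes C: "Core K dt ylo yhi xlo xhi ec ed y0 \<gamma> x0 xup xdn \<alpha> \<beta> lamlo lamhi Lamlo Lamhi"
    and H: "Hc K xlo xhi ec ed x0 xdn lamhi Lamhi u1 u2" and B: "Bc K u1 u2"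
    and G: "Gc K xlo xhi x0 xdn u1 u2" and D: "\<forall>k\<in>{1..K}. xdn k = 0" and g: "0 \<le> \<gamma>"
  shows "\<exists>z w. (\<forall>j. w j \<in> {0,1}) \<and> Sys1 K dt ylo yhi xlo xhi ec ed y0 \<gamma> x0 xup xdn z w"
proof -
  define w where "w = (\<lambda>j. if j \<in> {1..K-1} then u2 j else 0)"
  define z where "z = encZ \<alpha> \<beta> lamlo lamhi Lamlo Lamhi"
  have C0: "Core K dt ylo yhi xlo xhi ec ed y0 \<gamma> x0 xup xdn \<alpha> \<beta> lamlo (\<lambda>_. 0) Lamlo Lamhi"
  proof (rule Core_lamhi[OF C g])
    fix k assume k: "k \<in> {1..K}"
    then show "0 \<le> (0::real) \<and> 0 \<le> lamhi k \<and> ec * (xdn k - x0 k) - 0 \<le> Lamhi k k"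
      using C D unfolding Core_def by auto
  qed
  have H0: "Hc K xlo xhi ec ed x0 xdn (\<lambda>_. 0) Lamhi (\<lambda>l. 1 - w l) w"
    unfolding Hc_def
  proof (intro ballI)
    fix k l assume k: "k \<in> {1..K}" and l: "l \<in> {1..<k}"
    then have wl: "w l = u2 l" and dl: "xdn l = 0" using D by (auto simp: w_def)
    have "Lamhi k l \<ge> - x0 l / ed + u2 l * (1 / ed - ec) * xlo"
      "Lamhi k l \<ge> - ec * x0 l - (1 - u2 l) * (1 / ed - ec) * xhi"
      using H k l unfolding Hc_def by auto
    then show "Lamhi k l \<ge> (xdn l - x0 l) / ed - 0 + (1 - (1 - w l)) * (1 / ed - ec) * xlo \<and>
     Lamhi k l \<ge> - x0 l / ed + w l * (1 / ed - ec) * xlo \<and>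
     Lamhi k l \<ge> ec * (xdn l - x0 l) - 0 - (1 - w l) * (1 / ed - ec) * xhi \<and>
     Lamhi k l \<ge> - ec * x0 l - (1 - w l) * (1 / ed - ec) * xhi"
      unfolding wl dl by simp
  qed
  have G0: "Gc K xlo xhi x0 xdn (\<lambda>l. 1 - w l) w"
    unfolding Gc_def
  proof (intro ballI)
    fix k assume k: "k \<in> {1..K-1}"
    then have wl: "w k = u2 k" and dl: "xdn k = 0" using D by (auto simp: w_def)
    have "u2 k * xlo \<le> x0 k \<and> x0 k \<le> (1 - u2 k) * xhi" using G k unfolding Gc_def by auto
    then show "(1 - (1 - w k)) * xlo \<le> x0 k - xdn k \<and> x0 k - xdn k \<le> (1 - w k) * xhi \<and>
      w k * xlo \<le> x0 k \<and> x0 k \<le> (1 - w k) * xhi" unfolding wl dl by simp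
  qed
  have W: "\<forall>j. w j \<in> {0,1}" using B unfolding Bc_def w_def by auto
  have "Sys1 K dt ylo yhi xlo xhi ec ed y0 \<gamma> x0 xup xdn z w"
    unfolding Sys1_def z_def using C0 H0 G0 D by simp
  then show ?thesis using W by blast
qed

lemma p1_bwd:
  assumes W: "\<forall>j. w j \<in> {0,1}" and S: "Sys1 K dt ylo yhi xlo xhi ec ed y0 \<gamma> x0 xup xdn z w"
    and p: "xlo \<le> 0" "0 \<le> xhi" "0 < ed"
  shows "\<exists>\<alpha> \<beta> lamlo lamhi Lamlo Lamhi u1 u2.
     Core K dt ylo yhi xlo xhi ec ed y0 \<gamma> x0 xup xdn \<alpha> \<beta> lamlo lamhi Lamlo Lamhi \<and>
     Hc K xlo xhi ec ed x0 xdn lamhi Lamhi u1 u2 \<and> Bc K u1 u2 \<and> Gc K xlo xhi x0 xdn u1 u2 \<and>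
     Ic K xlo xhi ed x0 xdn lamhi Lamhi u1 u2"
proof -
  have D: "\<forall>k\<in>{1..K}. xdn k = 0" using S unfolding Sys1_def by auto
  have B: "Bc K (\<lambda>l. 1 - w l) w" using W unfolding Bc_def by auto
  have c1: "xlo * (xhi - xlo) / ed \<le> 0" using p by (simp add: mult_nonpos_nonneg divide_nonpos_pos)
  have c2: "0 \<le> xhi ^ 2 / (4 * ed)" using p by simp
  have I: "Ic K xlo xhi ed x0 xdn (\<lambda>_. 0) (dM2 z) (\<lambda>l. 1 - w l) w"
    unfolding Ic_def
  proof (intro ballI)
    fix k l assume k: "k \<in> {1..K}" and l: "l \<in> {1..<k}"
    then have dl: "xdn l = 0" using D by auto
    have "w l = 0 \<or> w l = 1" using W by auto
    then show "dM2 z k l * xdn l + 0 * x0 l \<ge> w l * (xlo * (xhi - xlo) / ed) - (1 - w l) * (xhi ^ 2 / (4 * ed))"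
      using c1 c2 dl by auto
  qed
  show ?thesis using S B I unfolding Sys1_def by blast
qed

lemma part1_set:
  assumes "xlo \<le> 0" "0 \<le> xhi" "0 < ed" "0 \<le> \<gamma>"
  shows "{(x0, xup, xdn) \<in> P_feasible_set K dt ylo yhi xlo xhi ec ed y0 \<gamma>. \<forall>k\<in>{1..K}. xdn k = 0} =
    {(x0, xup, xdn). (\<forall>j. j \<notin> {1..K} \<longrightarrow> x0 j = 0 \<and> xup j = 0 \<and> xdn j = 0) \<and>
      (\<exists>z w. (\<forall>j. w j \<in> {0,1}) \<and> Sys1 K dt ylo yhi xlo xhi ec ed y0 \<gamma> x0 xup xdn z w)}"
proof (rule set_eqI)
  fix t :: "(nat \<Rightarrow> real) \<times> (nat \<Rightarrow> real) \<times> (nat \<Rightarrow> real)"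
  obtain x0 xup xdn where t: "t = (x0, xup, xdn)" by (cases t) auto
  have D: "(\<exists>z w. (\<forall>j. w j \<in> {0,1}) \<and> Sys1 K dt ylo yhi xlo xhi ec ed y0 \<gamma> x0 xup xdn z w) \<Longrightarrow> \<forall>k\<in>{1..K}. xdn k = 0"
    unfolding Sys1_def by auto
  show "t \<in> {(x0, xup, xdn) \<in> P_feasible_set K dt ylo yhi xlo xhi ec ed y0 \<gamma>. \<forall>k\<in>{1..K}. xdn k = 0} \<longleftrightarrow>
    t \<in> {(x0, xup, xdn). (\<forall>j. j \<notin> {1..K} \<longrightarrow> x0 j = 0 \<and> xup j = 0 \<and> xdn j = 0) \<and>
      (\<exists>z w. (\<forall>j. w j \<in> {0,1}) \<and> Sys1 K dt ylo yhi xlo xhi ec ed y0 \<gamma> x0 xup xdn z w)}"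
    unfolding t using p1_fwd[OF _ _ _ _ _ assms(4)] p1_bwd[OF _ _ assms(1-3)] D
    by (auto simp: P_feas_iff)
qed



lemma de_nonneg: fixes ec ed :: real assumes "0 < ec" "ec \<le> 1" "0 < ed" "ed \<le> 1" shows "0 \<le> 1 / ed - ec"
proof -
  have "ec * ed \<le> 1" using assms by (simp add: mult_le_one)
  then show ?thesis using assms by (simp add: field_simps)
qed

lemma p2a_fwd:
  assumes C: "Core K dt ylo yhi xlo xhi ec ed y0 \<gamma> x0 xup xdn \<alpha> \<beta> lamlo lamhi Lamlo Lamhi"
    and H: "Hc K xlo xhi ec ed x0 xdn lamhi Lamhi u1 u2" and B: "Bc K u1 u2"
    and G: "Gc K xlo xhi x0 xdn u1 u2" and X: "\<forall>k\<in>{1..K}. x0 k \<le> 0"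
    and p: "xlo \<le> 0" "0 \<le> xhi" "0 < ec" "ec \<le> 1" "0 < ed" "ed \<le> 1"
  shows "\<exists>z. Sys2a K dt ylo yhi xlo xhi ec ed y0 \<gamma> x0 xup xdn z (\<lambda>_. 0)"
proof -
  define z where "z = encZ \<alpha> \<beta> lamlo lamhi Lamlo Lamhi"
  have de: "0 \<le> 1 / ed - ec" using de_nonneg p by blast
  have H0: "Hc K xlo xhi ec ed x0 xdn lamhi Lamhi (\<lambda>_. 0) (\<lambda>_. 1)"
    unfolding Hc_def
  proof (intro ballI)
    fix k l assume k: "k \<in> {1..K}" and l: "l \<in> {1..<k}"
    then have l1: "l \<in> {1..K-1}" and l2: "l \<in> {1..K}" by auto
    show "Lamhi k l \<ge> (xdn l - x0 l) / ed - lamhi k + (1 - 0) * (1 / ed - ec) * xlo \<and>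
      Lamhi k l \<ge> - x0 l / ed + 1 * (1 / ed - ec) * xlo \<and>
      Lamhi k l \<ge> ec * (xdn l - x0 l) - lamhi k - 0 * (1 / ed - ec) * xhi \<and>
      Lamhi k l \<ge> - ec * x0 l - (1 - 1) * (1 / ed - ec) * xhi"
    proof (rule h2a_fwd)
      show "u1 l \<in> {0,1}" "u2 l \<in> {0,1}" using B l1 unfolding Bc_def by auto
      show "(1 - u1 l) * xlo \<le> x0 l - xdn l" "x0 l - xdn l \<le> u1 l * xhi" "u2 l * xlo \<le> x0 l" "x0 l \<le> (1 - u2 l) * xhi"
        using G l1 unfolding Gc_def by auto
      show "0 \<le> xdn l" using C l2 unfolding Core_def by auto
      show "0 \<le> lamhi k" using C k unfolding Core_def by auto
      show "x0 l \<le> 0" using X l2 by auto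
      show "0 \<le> 1 / ed - ec" "xlo \<le> 0" "0 \<le> xhi" using de p by auto
      show "Lamhi k l \<ge> (xdn l - x0 l) / ed - lamhi k + (1 - u1 l) * (1 / ed - ec) * xlo"
        "Lamhi k l \<ge> - x0 l / ed + u2 l * (1 / ed - ec) * xlo"
        "Lamhi k l \<ge> ec * (xdn l - x0 l) - lamhi k - u1 l * (1 / ed - ec) * xhi"
        "Lamhi k l \<ge> - ec * x0 l - (1 - u2 l) * (1 / ed - ec) * xhi"
        using H k l unfolding Hc_def by auto
    qed
  qed
  have "Sys2a K dt ylo yhi xlo xhi ec ed y0 \<gamma> x0 xup xdn z (\<lambda>_. 0)"
    unfolding Sys2a_def SysL_def z_def using C H0 X by simp
  then show ?thesis by blast
qed

lemma p2a_bwd: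
  assumes S: "Sys2a K dt ylo yhi xlo xhi ec ed y0 \<gamma> x0 xup xdn z w"
    and p: "xlo \<le> 0" "0 \<le> xhi" "0 < ec" "ec \<le> 1" "0 < ed" "ed \<le> 1" "0 \<le> \<gamma>"
  shows "\<exists>\<alpha> \<beta> lamlo lamhi Lamlo Lamhi u1 u2.
     Core K dt ylo yhi xlo xhi ec ed y0 \<gamma> x0 xup xdn \<alpha> \<beta> lamlo lamhi Lamlo Lamhi \<and>
     Hc K xlo xhi ec ed x0 xdn lamhi Lamhi u1 u2 \<and> Bc K u1 u2 \<and> Gc K xlo xhi x0 xdn u1 u2 \<and>
     Ic K xlo xhi ed x0 xdn lamhi Lamhi u1 u2"
proof -
  define lam' where "lam' = (\<lambda>k. min (dD z k) (-xlo/ed))"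
  have C: "Core K dt ylo yhi xlo xhi ec ed y0 \<gamma> x0 xup xdn (dA z) (dB z) (dC z) (dD z) (dM1 z) (dM2 z)"
    and H: "Hc K xlo xhi ec ed x0 xdn (dD z) (dM2 z) (\<lambda>_. 0) (\<lambda>_. 1)"
    and X: "\<forall>k\<in>{1..K}. x0 k \<le> 0"
    using S unfolding Sys2a_def SysL_def by auto
  have c1: "ec * (d - a) + xlo / ed \<le> 0" if "xlo \<le> a - d" for a d
  proof -
    have "ec * (d - a) \<le> ec * (-xlo)" using p that by (intro mult_left_mono) auto
    also have "\<dots> \<le> -xlo" using p by (simp add: mult_le_cancel_right1 mult_nonneg_nonpos)
    also have "\<dots> \<le> -xlo / ed" using p by (simp add: field_simps mult_le_cancel_right1 mult_nonpos_nonneg)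
    finally show ?thesis by simp
  qed
  have C': "Core K dt ylo yhi xlo xhi ec ed y0 \<gamma> x0 xup xdn (dA z) (dB z) (dC z) lam' (dM1 z) (dM2 z)"
  proof (rule Core_lamhi[OF C p(7)])
    fix k assume k: "k \<in> {1..K}"
    have f: "dM2 z k k \<ge> ec * (xdn k - x0 k) - dD z k" "dM2 z k k \<ge> 0" "xlo \<le> x0 k - xdn k" "0 \<le> dD z k"
      using C k unfolding Core_def by auto
    have "0 \<le> -xlo/ed" using p by (simp add: divide_nonpos_pos)
    then show "0 \<le> lam' k \<and> lam' k \<le> dD z k \<and> ec * (xdn k - x0 k) - lam' k \<le> dM2 z k k"
      using f c1[OF f(3)] by (auto simp: lam'_def min_def)
  qed
  have HI: "dM2 z k l \<ge> (xdn l - x0 l) / ed - lam' k + (1 - 0) * (1/ed - ec) * xlo \<and>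
      dM2 z k l \<ge> - x0 l / ed + 1 * (1/ed - ec) * xlo \<and>
      dM2 z k l \<ge> ec * (xdn l - x0 l) - lam' k - 0 * (1/ed - ec) * xhi \<and>
      dM2 z k l \<ge> - ec * x0 l - (1 - 1) * (1/ed - ec) * xhi \<and>
      dM2 z k l * xdn l + lam' k * x0 l \<ge> 1 * (xlo * (xhi - xlo) / ed) - 0 * (xhi ^ 2 / (4 * ed))"
    if k: "k \<in> {1..K}" and l: "l \<in> {1..<k}" for k l
    unfolding lam'_def
  proof (rule h2a_bwd)
    have l2: "l \<in> {1..K}" using k l by auto
    show "0 \<le> xdn l" "xlo \<le> x0 l - xdn l" using C l2 unfolding Core_def by auto
    show "0 \<le> dD z k" using C k unfolding Core_def by auto
    show "x0 l \<le> 0" using X l2 by auto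
    show "xlo \<le> 0" "0 \<le> xhi" "0 < ec" "ec \<le> 1" "0 < ed" "ed \<le> 1" using p by auto
    show "dM2 z k l \<ge> (xdn l - x0 l) / ed - dD z k + (1 - 0) * (1/ed - ec) * xlo"
      "dM2 z k l \<ge> - x0 l / ed + 1 * (1/ed - ec) * xlo"
      "dM2 z k l \<ge> ec * (xdn l - x0 l) - dD z k - 0 * (1/ed - ec) * xhi"
      "dM2 z k l \<ge> - ec * x0 l - (1 - 1) * (1/ed - ec) * xhi"
      using H k l unfolding Hc_def by auto
  qed
  have H': "Hc K xlo xhi ec ed x0 xdn lam' (dM2 z) (\<lambda>_. 0) (\<lambda>_. 1)"
    unfolding Hc_def using HI by blast
  have I': "Ic K xlo xhi ed x0 xdn lam' (dM2 z) (\<lambda>_. 0) (\<lambda>_. 1)"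
    unfolding Ic_def using HI by blast
  have B': "Bc K (\<lambda>_. 0) (\<lambda>_. 1)" unfolding Bc_def by auto
  have G': "Gc K xlo xhi x0 xdn (\<lambda>_. 0) (\<lambda>_. 1)"
    unfolding Gc_def
  proof (intro ballI)
    fix k assume k: "k \<in> {1..K-1}"
    then have k2: "k \<in> {1..K}" by auto
    have "0 \<le> xdn k" "xlo \<le> x0 k - xdn k" using C k2 unfolding Core_def by auto
    moreover have "x0 k \<le> 0" using X k2 by auto
    ultimately show "(1 - 0) * xlo \<le> x0 k - xdn k \<and> x0 k - xdn k \<le> 0 * xhi \<and> 1 * xlo \<le> x0 k \<and> x0 k \<le> (1 - 1) * xhi"
      by auto
  qed
  show ?thesis using C' H' B' G' I' by blast
qed

lemma part2a_set:
  assumes "xlo \<le> 0" "0 \<le> xhi" "0 < ec" "ec \<le> 1" "0 < ed" "ed \<le> 1" "0 \<le> \<gamma>"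
  shows "{(x0, xup, xdn) \<in> P_feasible_set K dt ylo yhi xlo xhi ec ed y0 \<gamma>. \<forall>k\<in>{1..K}. x0 k \<le> 0} =
    {(x0, xup, xdn). (\<forall>j. j \<notin> {1..K} \<longrightarrow> x0 j = 0 \<and> xup j = 0 \<and> xdn j = 0) \<and>
      (\<exists>z. Sys2a K dt ylo yhi xlo xhi ec ed y0 \<gamma> x0 xup xdn z (\<lambda>_. 0))}"
proof (rule set_eqI)
  fix t :: "(nat \<Rightarrow> real) \<times> (nat \<Rightarrow> real) \<times> (nat \<Rightarrow> real)"
  obtain x0 xup xdn where t: "t = (x0, xup, xdn)" by (cases t) auto
  have D: "(\<exists>z. Sys2a K dt ylo yhi xlo xhi ec ed y0 \<gamma> x0 xup xdn z (\<lambda>_. 0)) \<Longrightarrow> \<forall>k\<in>{1..K}. x0 k \<le> 0"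
    unfolding Sys2a_def by auto
  show "t \<in> {(x0, xup, xdn) \<in> P_feasible_set K dt ylo yhi xlo xhi ec ed y0 \<gamma>. \<forall>k\<in>{1..K}. x0 k \<le> 0} \<longleftrightarrow>
    t \<in> {(x0, xup, xdn). (\<forall>j. j \<notin> {1..K} \<longrightarrow> x0 j = 0 \<and> xup j = 0 \<and> xdn j = 0) \<and>
      (\<exists>z. Sys2a K dt ylo yhi xlo xhi ec ed y0 \<gamma> x0 xup xdn z (\<lambda>_. 0))}"
    unfolding t using p2a_fwd[OF _ _ _ _ _ assms(1-6)] p2a_bwd[OF _ assms] D
    by (auto simp: P_feas_iff)
qed



lemma Hc11: "Hc K xlo xhi 1 1 x0 xdn lamhi Lamhi u1 u2 \<longleftrightarrow>
  (\<forall>k\<in>{1..K}. \<forall>l\<in>{1..<k}. Lamhi k l \<ge> xdn l - x0 l - lamhi k \<and> Lamhi k l \<ge> - x0 l)"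
  unfolding Hc_def by auto

lemma p2c_fwd:
  assumes C: "Core K dt ylo yhi xlo xhi 1 1 y0 \<gamma> x0 xup xdn \<alpha> \<beta> lamlo lamhi Lamlo Lamhi"
    and H: "Hc K xlo xhi 1 1 x0 xdn lamhi Lamhi u1 u2"
  shows "\<exists>z. SysL K dt ylo yhi xlo xhi 1 1 y0 \<gamma> 0 0 x0 xup xdn z (\<lambda>_. 0)"
proof -
  define z where "z = encZ \<alpha> \<beta> lamlo lamhi Lamlo Lamhi"
  have "SysL K dt ylo yhi xlo xhi 1 1 y0 \<gamma> 0 0 x0 xup xdn z (\<lambda>_. 0)"
    unfolding SysL_def z_def using C H by (simp add: Hc11)
  then show ?thesis by blast
qed

lemma p2c_bwd:
  assumes S: "SysL K dt ylo yhi xlo xhi 1 1 y0 \<gamma> 0 0 x0 xup xdn z w"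
    and p: "xlo \<le> 0" "0 \<le> xhi" "0 \<le> \<gamma>"
  shows "\<exists>\<alpha> \<beta> lamlo lamhi Lamlo Lamhi u1 u2.
     Core K dt ylo yhi xlo xhi 1 1 y0 \<gamma> x0 xup xdn \<alpha> \<beta> lamlo lamhi Lamlo Lamhi \<and>
     Hc K xlo xhi 1 1 x0 xdn lamhi Lamhi u1 u2 \<and> Bc K u1 u2 \<and> Gc K xlo xhi x0 xdn u1 u2 \<and>
     Ic K xlo xhi 1 x0 xdn lamhi Lamhi u1 u2"
proof -
  define lam' where "lam' = (\<lambda>k. min (dD z k) (xhi - xlo))"
  define u1 where "u1 = (\<lambda>l. if 0 \<le> x0 l - xdn l then 1 else 0 :: real)"
  define u2 where "u2 = (\<lambda>l. if x0 l \<le> 0 then 1 else 0 :: real)"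
  have C: "Core K dt ylo yhi xlo xhi 1 1 y0 \<gamma> x0 xup xdn (dA z) (dB z) (dC z) (dD z) (dM1 z) (dM2 z)"
    and H: "\<forall>k\<in>{1..K}. \<forall>l\<in>{1..<k}. dM2 z k l \<ge> xdn l - x0 l - dD z k \<and> dM2 z k l \<ge> - x0 l"
    using S unfolding SysL_def Hc11 by auto
  have base: "0 \<le> xdn l" "xlo \<le> x0 l - xdn l" "x0 l \<le> xhi" if "l \<in> {1..K}" for l
  proof -
    have "\<forall>k\<in>{1..K}. xup k \<ge> 0 \<and> xdn k \<ge> 0" "\<forall>k\<in>{1..K}. x0 k + xup k \<le> xhi \<and> x0 k - xdn k \<ge> xlo"
      using C unfolding Core_def by blast+
    then show "0 \<le> xdn l" "xlo \<le> x0 l - xdn l" "x0 l \<le> xhi" using that by force+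
  qed
  have C': "Core K dt ylo yhi xlo xhi 1 1 y0 \<gamma> x0 xup xdn (dA z) (dB z) (dC z) lam' (dM1 z) (dM2 z)"
  proof (rule Core_lamhi[OF C p(3)])
    fix k assume k: "k \<in> {1..K}"
    have f: "dM2 z k k \<ge> 1 * (xdn k - x0 k) - dD z k" "dM2 z k k \<ge> - 1 * x0 k" "0 \<le> dD z k"
      using C k unfolding Core_def by auto
    have "xdn k \<le> xhi - xlo" using base[OF k] by auto
    then show "0 \<le> lam' k \<and> lam' k \<le> dD z k \<and> 1 * (xdn k - x0 k) - lam' k \<le> dM2 z k k"
      using f p by (auto simp: lam'_def min_def)
  qed
  have E: "dM2 z k l \<ge> xdn l - x0 l - lam' k \<and> u1 l \<in> {0,1} \<and> u2 l \<in> {0,1} \<and>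
    (1 - u1 l) * xlo \<le> x0 l - xdn l \<and> x0 l - xdn l \<le> u1 l * xhi \<and> u2 l * xlo \<le> x0 l \<and> x0 l \<le> (1 - u2 l) * xhi \<and>
    dM2 z k l * xdn l + lam' k * x0 l \<ge> u2 l * (xlo * (xhi - xlo)) - u1 l * (xhi ^ 2 / 4)"
    if k: "k \<in> {1..K}" and l: "l \<in> {1..<k}" for k l
  proof -
    have l2: "l \<in> {1..K}" using k l by auto
    have h: "dM2 z k l \<ge> xdn l - x0 l - dD z k" "dM2 z k l \<ge> - x0 l" using H k l by auto
    have lk: "0 \<le> dD z k" using C k unfolding Core_def by auto
    note r = h2c_bwd[OF base(1)[OF l2] lk base(2)[OF l2] base(3)[OF l2] p(1,2) h]
    show ?thesis using r unfolding lam'_def u1_def u2_def by blast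
  qed
  have H': "Hc K xlo xhi 1 1 x0 xdn lam' (dM2 z) u1 u2" unfolding Hc11
  proof (intro ballI)
    fix k l assume k: "k \<in> {1..K}" and l: "l \<in> {1..<k}"
    from E[OF k l] H k l show "dM2 z k l \<ge> xdn l - x0 l - lam' k \<and> dM2 z k l \<ge> - x0 l"
      by auto
  qed
  have I': "Ic K xlo xhi 1 x0 xdn lam' (dM2 z) u1 u2" unfolding Ic_def
  proof (intro ballI)
    fix k l assume k: "k \<in> {1..K}" and l: "l \<in> {1..<k}"
    from E[OF k l] show "dM2 z k l * xdn l + lam' k * x0 l \<ge> u2 l * (xlo * (xhi - xlo) / 1) - u1 l * (xhi ^ 2 / (4 * 1))"
      by simp
  qed
  have B': "Bc K u1 u2" unfolding Bc_def u1_def u2_def by auto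
  have G': "Gc K xlo xhi x0 xdn u1 u2"
    unfolding Gc_def
  proof (intro ballI)
    fix k assume k: "k \<in> {1..K-1}"
    then have k2: "k \<in> {1..K}" by auto
    show "(1 - u1 k) * xlo \<le> x0 k - xdn k \<and> x0 k - xdn k \<le> u1 k * xhi \<and> u2 k * xlo \<le> x0 k \<and> x0 k \<le> (1 - u2 k) * xhi"
      using base[OF k2] p unfolding u1_def u2_def by auto
  qed
  show ?thesis using C' H' B' G' I' by blast
qed

lemma part2c_set:
  assumes "xlo \<le> 0" "0 \<le> xhi" "0 \<le> \<gamma>"
  shows "P_feasible_set K dt ylo yhi xlo xhi 1 1 y0 \<gamma> =
    {(x0, xup, xdn). (\<forall>j. j \<notin> {1..K} \<longrightarrow> x0 j = 0 \<and> xup j = 0 \<and> xdn j = 0) \<and>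
      (\<exists>z. SysL K dt ylo yhi xlo xhi 1 1 y0 \<gamma> 0 0 x0 xup xdn z (\<lambda>_. 0))}"
proof (rule set_eqI)
  fix t :: "(nat \<Rightarrow> real) \<times> (nat \<Rightarrow> real) \<times> (nat \<Rightarrow> real)"
  obtain x0 xup xdn where t: "t = (x0, xup, xdn)" by (cases t) auto
  show "t \<in> P_feasible_set K dt ylo yhi xlo xhi 1 1 y0 \<gamma> \<longleftrightarrow>
    t \<in> {(x0, xup, xdn). (\<forall>j. j \<notin> {1..K} \<longrightarrow> x0 j = 0 \<and> xup j = 0 \<and> xdn j = 0) \<and>
      (\<exists>z. SysL K dt ylo yhi xlo xhi 1 1 y0 \<gamma> 0 0 x0 xup xdn z (\<lambda>_. 0))}"
    unfolding t using p2c_fwd p2c_bwd[OF _ assms]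
    by (auto simp: P_feas_iff)
qed

lemma K1_triv: "Hc 1 xlo xhi ec ed x0 xdn lamhi Lamhi u1 u2" "Gc 1 xlo xhi x0 xdn u1 u2" "Bc 1 u1 u2"
  "Ic 1 xlo xhi ed x0 xdn lamhi Lamhi u1 u2"
  unfolding Hc_def Gc_def Bc_def Ic_def by auto

lemma part2b_set:
  shows "P_feasible_set 1 dt ylo yhi xlo xhi ec ed y0 \<gamma> =
    {(x0, xup, xdn). (\<forall>j. j \<notin> {1..1} \<longrightarrow> x0 j = 0 \<and> xup j = 0 \<and> xdn j = 0) \<and>
      (\<exists>z. SysL 1 dt ylo yhi xlo xhi ec ed y0 \<gamma> 0 0 x0 xup xdn z (\<lambda>_. 0))}"
proof (rule set_eqI)
  fix t :: "(nat \<Rightarrow> real) \<times> (nat \<Rightarrow> real) \<times> (nat \<Rightarrow> real)"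
  obtain x0 xup xdn where t: "t = (x0, xup, xdn)" by (cases t) auto
  have "(\<exists>\<alpha> \<beta> lamlo lamhi Lamlo Lamhi.
     Core 1 dt ylo yhi xlo xhi ec ed y0 \<gamma> x0 xup xdn \<alpha> \<beta> lamlo lamhi Lamlo Lamhi) \<longleftrightarrow>
     (\<exists>z. SysL 1 dt ylo yhi xlo xhi ec ed y0 \<gamma> 0 0 x0 xup xdn z (\<lambda>_. 0))"
  proof
    assume "\<exists>\<alpha> \<beta> lamlo lamhi Lamlo Lamhi.
     Core 1 dt ylo yhi xlo xhi ec ed y0 \<gamma> x0 xup xdn \<alpha> \<beta> lamlo lamhi Lamlo Lamhi"
    then obtain \<alpha> \<beta> lamlo lamhi Lamlo Lamhi where
      "Core 1 dt ylo yhi xlo xhi ec ed y0 \<gamma> x0 xup xdn \<alpha> \<beta> lamlo lamhi Lamlo Lamhi" by blast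
    then have "SysL 1 dt ylo yhi xlo xhi ec ed y0 \<gamma> 0 0 x0 xup xdn (encZ \<alpha> \<beta> lamlo lamhi Lamlo Lamhi) (\<lambda>_. 0)"
      unfolding SysL_def using K1_triv by simp
    then show "\<exists>z. SysL 1 dt ylo yhi xlo xhi ec ed y0 \<gamma> 0 0 x0 xup xdn z (\<lambda>_. 0)" by blast
  next
    assume "\<exists>z. SysL 1 dt ylo yhi xlo xhi ec ed y0 \<gamma> 0 0 x0 xup xdn z (\<lambda>_. 0)"
    then show "\<exists>\<alpha> \<beta> lamlo lamhi Lamlo Lamhi.
     Core 1 dt ylo yhi xlo xhi ec ed y0 \<gamma> x0 xup xdn \<alpha> \<beta> lamlo lamhi Lamlo Lamhi"
      unfolding SysL_def by blast
  qed
  then show "t \<in> P_feasible_set 1 dt ylo yhi xlo xhi ec ed y0 \<gamma> \<longleftrightarrow>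
    t \<in> {(x0, xup, xdn). (\<forall>j. j \<notin> {1..1} \<longrightarrow> x0 j = 0 \<and> xup j = 0 \<and> xdn j = 0) \<and>
      (\<exists>z. SysL 1 dt ylo yhi xlo xhi ec ed y0 \<gamma> 0 0 x0 xup xdn z (\<lambda>_. 0))}"
    unfolding t by (simp add: P_feas_iff K1_triv K1_triv[unfolded One_nat_def])
qed

theorem proposition8:
  fixes K :: nat and dt ylo yhi xlo xhi ec ed y0 \<gamma> :: real
  assumes "K \<ge> 1" and "dt > 0"
    and "0 \<le> ylo" and "ylo \<le> yhi" and "xlo \<le> 0" and "0 \<le> xhi"
    and "0 < ec" and "ec \<le> 1" and "0 < ed" and "ed \<le> 1"
    and "y0 \<ge> 0" and "0 \<le> \<gamma>" and "\<gamma> \<le> real K * dt"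
  shows "milp_representable K
           {(x0, xup, xdn) \<in> P_feasible_set K dt ylo yhi xlo xhi ec ed y0 \<gamma>.
              \<forall>k\<in>{1..K}. xdn k = 0}
       \<and> lp_representable K
           {(x0, xup, xdn) \<in> P_feasible_set K dt ylo yhi xlo xhi ec ed y0 \<gamma>.
              \<forall>k\<in>{1..K}. x0 k \<le> 0}
       \<and> (K = 1 \<longrightarrow> lp_representable K (P_feasible_set K dt ylo yhi xlo xhi ec ed y0 \<gamma>))
       \<and> (ec = 1 \<and> ed = 1 \<longrightarrow>
            lp_representable K (P_feasible_set K dt ylo yhi xlo xhi ec ed y0 \<gamma>))"
proof (intro conjI impI)
  show "milp_representable K
           {(x0, xup, xdn) \<in> P_feasible_set K dt ylo yhi xlo xhi ec ed y0 \<gamma>. \<forall>k\<in>{1..K}. xdn k = 0}"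
    unfolding part1_set[OF assms(5,6,9,12)] by (rule milp_intro[OF polyh_Sys1])
  show "lp_representable K
           {(x0, xup, xdn) \<in> P_feasible_set K dt ylo yhi xlo xhi ec ed y0 \<gamma>. \<forall>k\<in>{1..K}. x0 k \<le> 0}"
    unfolding part2a_set[OF assms(5-10,12)] by (rule lp_intro[OF polyh_Sys2a])
  show "lp_representable K (P_feasible_set K dt ylo yhi xlo xhi ec ed y0 \<gamma>)" if "K = 1"
    unfolding that part2b_set by (rule lp_intro[OF polyh_SysL])
  show "lp_representable K (P_feasible_set K dt ylo yhi xlo xhi ec ed y0 \<gamma>)" if "ec = 1 \<and> ed = 1"
  proof -
    from that have e: "ec = 1" "ed = 1" by auto
    show ?thesis unfolding e part2c_set[OF assms(5,6,12)] by (rule lp_intro[OF polyh_SysL])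
  qed
qed

end
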